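(* Let $\lambda,\mu\in\mathbb{C}$ satisfy one of: (i) $\mu\notin\frac12\mathbb{Z}$; (ii) $\mu\in\frac12+\mathbb{Z}$ and $\lambda\notin\{-3,-1,1\}$; (iii) $\mu\in\mathbb{Z}$ and $\lambda\neq-1$. Let $L=\widetilde{L_{\lambda,\mu}}^1$ and let $\Delta_j(L)$ be the space of $\frac12$-derivations of $L$ of degree $j\in\mathbb{Z}$. If $\lambda\neq1$, then $\Delta_0(L)=\langle\mathrm{Id}\rangle$ and $\Delta_j(L)=0$ for $j\neq0$. If $\lambda=1$ (so we are in case (i) or (iii)), then $\Delta_j(L)$ consists exactly of the maps $c\,\delta_{j,0}\mathrm{Id}+\varphi_{j,\alpha}$ with $c,\alpha\in\mathbb{C}$, where $\varphi_{j,\alpha}(L_n)=\alpha M_{n+j}$ for all $n\in\mathbb{Z}$ and $\varphi_{j,\alpha}$ vanishes on all $M_n$, $Y_{n+\frac12}$ and on $C_L$.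
   Context: For $\lambda,\mu\in\mathbb{C}$, $\widetilde{L_{\lambda,\mu}}^1$ is the complex Lie algebra with basis $\{L_n,M_n,Y_{n+\frac12},C_L\mid n\in\mathbb{Z}\}$, $C_L$ central, and nonzero brackets $[L_m,L_n]=(n-m)L_{m+n}+\frac{m^3-m}{12}\delta_{m+n,0}C_L$, $[L_m,M_n]=(n-\lambda m+2\mu)M_{m+n}$, $[L_m,Y_{n+\frac12}]=(n+\frac12-\frac{\lambda+1}{2}m+\mu)Y_{m+n+\frac12}$, $[Y_{m+\frac12},Y_{n+\frac12}]=(n-m)M_{m+n+1}$. It is $\frac12\mathbb{Z}$-graded by $W_0=\langle L_0,M_0,C_L\rangle$, $W_n=\langle L_n,M_n\rangle$ ($n\neq0$), $W_{n+\frac12}=\langle Y_{n+\frac12}\rangle$. A $\frac12$-derivation is a linear map $\varphi$ with $\varphi([x,y])=\frac12([\varphi(x),y]+[x,\varphi(y)])$; it has degree $g$ if $\varphi(W_h)\subseteq W_{g+h}$ for all $h\in\frac12\mathbb{Z}$. *)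

theory Defs
  imports Complex_Main
begin

text \<open>Basis of the Lie algebra: BL n = L_n, BM n = M_n, BY n = Y_(n+1/2), BC = C_L.\<close>
datatype basis = BL int | BM int | BY int | BC

definition carrier :: "(basis \<Rightarrow> complex) set" where
  "carrier = {x. finite {b. x b \<noteq> 0}}"

definition supp :: "(basis \<Rightarrow> complex) \<Rightarrow> basis set" where
  "supp x = {b. x b \<noteq> 0}"

definition ev :: "basis \<Rightarrow> basis \<Rightarrow> complex" where
  "ev b = (\<lambda>c. if c = b then 1 else 0)"

fun brb :: "complex \<Rightarrow> complex \<Rightarrow> basis \<Rightarrow> basis \<Rightarrow> basis \<Rightarrow> complex" where
  "brb lam mu (BL m) (BL n) =
     (\<lambda>c. of_int (n - m) * ev (BL (m + n)) c
          + (if m + n = 0 then (of_int m ^ 3 - of_int m) / 12 else 0) * ev BC c)"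
| "brb lam mu (BL m) (BM n) = (\<lambda>c. (of_int n - lam * of_int m + 2 * mu) * ev (BM (m + n)) c)"
| "brb lam mu (BM n) (BL m) = (\<lambda>c. - (of_int n - lam * of_int m + 2 * mu) * ev (BM (m + n)) c)"
| "brb lam mu (BL m) (BY n) =
     (\<lambda>c. (of_int n + 1/2 - (lam + 1) / 2 * of_int m + mu) * ev (BY (m + n)) c)"
| "brb lam mu (BY n) (BL m) =
     (\<lambda>c. - (of_int n + 1/2 - (lam + 1) / 2 * of_int m + mu) * ev (BY (m + n)) c)"
| "brb lam mu (BY m) (BY n) = (\<lambda>c. of_int (n - m) * ev (BM (m + n + 1)) c)"
| "brb lam mu _ _ = (\<lambda>c. 0)"

definition br :: "complex \<Rightarrow> complex \<Rightarrow> (basis \<Rightarrow> complex) \<Rightarrow> (basis \<Rightarrow> complex) \<Rightarrow> (basis \<Rightarrow> complex)" where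
  "br lam mu x y = (\<lambda>c. \<Sum>a\<in>supp x. \<Sum>b\<in>supp y. x a * y b * brb lam mu a b c)"

text \<open>Doubled degree of a basis element (the grading is by 1/2 Z).\<close>
fun deg2 :: "basis \<Rightarrow> int" where
  "deg2 (BL n) = 2 * n"
| "deg2 (BM n) = 2 * n"
| "deg2 (BY n) = 2 * n + 1"
| "deg2 BC = 0"

text \<open>x lies in W_(k/2).\<close>
definition homog :: "int \<Rightarrow> (basis \<Rightarrow> complex) \<Rightarrow> bool" where
  "homog k x \<longleftrightarrow> x \<in> carrier \<and> (\<forall>b. x b \<noteq> 0 \<longrightarrow> deg2 b = k)"

definition is_linear :: "((basis \<Rightarrow> complex) \<Rightarrow> (basis \<Rightarrow> complex)) \<Rightarrow> bool" where
  "is_linear phi \<longleftrightarrow> (\<forall>x\<in>carrier. phi x \<in> carrier) \<and>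
     (\<forall>x\<in>carrier. \<forall>y\<in>carrier. phi (\<lambda>b. x b + y b) = (\<lambda>b. phi x b + phi y b)) \<and>
     (\<forall>x\<in>carrier. \<forall>c. phi (\<lambda>b. c * x b) = (\<lambda>b. c * phi x b))"

definition half_derivation :: "complex \<Rightarrow> complex \<Rightarrow> ((basis \<Rightarrow> complex) \<Rightarrow> (basis \<Rightarrow> complex)) \<Rightarrow> bool" where
  "half_derivation lam mu phi \<longleftrightarrow> is_linear phi \<and>
     (\<forall>x\<in>carrier. \<forall>y\<in>carrier.
        phi (br lam mu x y) = (\<lambda>c. (br lam mu (phi x) y c + br lam mu x (phi y) c) / 2))"

text \<open>Degree g (given doubled as g2): phi(W_h) \<subseteq> W_(g+h) for all h in 1/2 Z.\<close>
definition has_degree2 :: "int \<Rightarrow> ((basis \<Rightarrow> complex) \<Rightarrow> (basis \<Rightarrow> complex)) \<Rightarrow> bool" where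
  "has_degree2 g2 phi \<longleftrightarrow> (\<forall>k x. homog k x \<longrightarrow> homog (k + g2) (phi x))"

definition Delta :: "complex \<Rightarrow> complex \<Rightarrow> int \<Rightarrow> ((basis \<Rightarrow> complex) \<Rightarrow> (basis \<Rightarrow> complex)) set" where
  "Delta lam mu j = {phi. half_derivation lam mu phi \<and> has_degree2 (2 * j) phi}"

definition phi_ja :: "int \<Rightarrow> complex \<Rightarrow> (basis \<Rightarrow> complex) \<Rightarrow> (basis \<Rightarrow> complex)" where
  "phi_ja j alpha x = (\<lambda>b. case b of BM m \<Rightarrow> alpha * x (BL (m - j)) | _ \<Rightarrow> 0)"

end

theory Submission imports Defs begin

lemma ev_same[simp]: "ev b b = 1" unfolding ev_def by simp
lemma ev_diff[simp]: "c \<noteq> b \<Longrightarrow> ev b c = 0" unfolding ev_def by simp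

lemma ev_eq: "ev b c = (if c = b then 1 else 0)" unfolding ev_def by simp

lemma ev_carrier[simp]: "ev b \<in> carrier"
  unfolding carrier_def ev_def by simp

lemma supp_ev[simp]: "supp (ev b) = {b}"
  unfolding supp_def ev_def by auto

lemma br_ev_ev: "br lam mu (ev a) (ev b) = brb lam mu a b"
  unfolding br_def by simp

lemma br_left_sum:
  assumes "finite S" "supp x \<subseteq> S"
  shows "br lam mu x (ev b) c = (\<Sum>a\<in>S. x a * brb lam mu a b c)"
proof -
  have "br lam mu x (ev b) c = (\<Sum>a\<in>supp x. x a * brb lam mu a b c)"
    unfolding br_def by simp
  also have "\<dots> = (\<Sum>a\<in>S. x a * brb lam mu a b c)"
    by (rule sum.mono_neutral_left) (use assms in \<open>auto simp: supp_def\<close>)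
  finally show ?thesis .
qed

lemma br_right_sum:
  assumes "finite S" "supp y \<subseteq> S"
  shows "br lam mu (ev a) y c = (\<Sum>b\<in>S. y b * brb lam mu a b c)"
proof -
  have "br lam mu (ev a) y c = (\<Sum>b\<in>supp y. y b * brb lam mu a b c)"
    unfolding br_def by simp
  also have "\<dots> = (\<Sum>b\<in>S. y b * brb lam mu a b c)"
    by (rule sum.mono_neutral_left) (use assms in \<open>auto simp: supp_def\<close>)
  finally show ?thesis .
qed

lemma carrier_smult[simp]: "x \<in> carrier \<Longrightarrow> (\<lambda>b. c * x b) \<in> carrier"
  unfolding carrier_def by (auto elim: finite_subset[rotated])

lemma carrier_add[simp]: "x \<in> carrier \<Longrightarrow> y \<in> carrier \<Longrightarrow> (\<lambda>b. x b + y b) \<in> carrier"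
proof -
  assume "x \<in> carrier" "y \<in> carrier"
  then have "finite ({b. x b \<noteq> 0} \<union> {b. y b \<noteq> 0})" unfolding carrier_def by auto
  moreover have "{b. x b + y b \<noteq> 0} \<subseteq> {b. x b \<noteq> 0} \<union> {b. y b \<noteq> 0}" by auto
  ultimately show ?thesis unfolding carrier_def using finite_subset by blast
qed

lemma lin_smult: "is_linear phi \<Longrightarrow> x \<in> carrier \<Longrightarrow> phi (\<lambda>b. c * x b) = (\<lambda>b. c * phi x b)"
  unfolding is_linear_def by blast
lemma lin_add: "is_linear phi \<Longrightarrow> x \<in> carrier \<Longrightarrow> y \<in> carrier \<Longrightarrow> phi (\<lambda>b. x b + y b) = (\<lambda>b. phi x b + phi y b)"
  unfolding is_linear_def by blast

lemma lin1: "is_linear phi \<Longrightarrow> phi (\<lambda>c. x * ev b c) = (\<lambda>c. x * phi (ev b) c)"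
  by (rule lin_smult) auto

lemma lin2: "is_linear phi \<Longrightarrow> phi (\<lambda>c. x * ev b1 c + y * ev b2 c) = (\<lambda>c. x * phi (ev b1) c + y * phi (ev b2) c)"
proof -
  assume l: "is_linear phi"
  have "phi (\<lambda>c. x * ev b1 c + y * ev b2 c) = (\<lambda>c. phi (\<lambda>c. x * ev b1 c) c + phi (\<lambda>c. y * ev b2 c) c)"
    by (rule lin_add[OF l]) auto
  then show ?thesis using lin1[OF l] by simp
qed

lemma lin0: "is_linear phi \<Longrightarrow> phi (\<lambda>c. 0) = (\<lambda>c. 0)"
  using lin1[of phi 0 BC] by simp

lemma carrier_sum_ev: "finite S \<Longrightarrow> (\<lambda>c. \<Sum>a\<in>S. g a * ev a c) \<in> carrier"
proof -
  assume f: "finite S"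
  have "{c. (\<Sum>a\<in>S. g a * ev a c) \<noteq> 0} \<subseteq> S"
  proof
    fix c assume "c \<in> {c. (\<Sum>a\<in>S. g a * ev a c) \<noteq> 0}"
    then have "(\<Sum>a\<in>S. g a * ev a c) \<noteq> 0" by simp
    show "c \<in> S"
    proof (rule ccontr)
      assume "c \<notin> S"
      then have "\<forall>a\<in>S. g a * ev a c = 0" by (auto simp: ev_eq)
      then have "(\<Sum>a\<in>S. g a * ev a c) = 0" by (rule sum.neutral)
      with \<open>(\<Sum>a\<in>S. g a * ev a c) \<noteq> 0\<close> show False by simp
    qed
  qed
  then show ?thesis unfolding carrier_def using f finite_subset by blast
qed

lemma lin_sum:
  assumes l: "is_linear f" and fin: "finite S"
  shows "f (\<lambda>c. \<Sum>a\<in>S. g a * ev a c) = (\<lambda>c. \<Sum>a\<in>S. g a * f (ev a) c)"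
  using fin
proof (induction S rule: finite_induct)
  case empty
  then show ?case using lin0[OF l] by simp
next
  case (insert a S)
  have e1: "(\<lambda>c. \<Sum>a\<in>insert a S. g a * ev a c) = (\<lambda>c. g a * ev a c + (\<Sum>a\<in>S. g a * ev a c))"
    using insert(1,2) by (simp add: sum.insert)
  have e2: "f (\<lambda>c. g a * ev a c + (\<Sum>a\<in>S. g a * ev a c)) = (\<lambda>c. f (\<lambda>c. g a * ev a c) c + f (\<lambda>c. \<Sum>a\<in>S. g a * ev a c) c)"
    by (rule lin_add[OF l]) (simp_all add: carrier_sum_ev[OF insert(1)])
  have e3: "(\<lambda>c. \<Sum>a\<in>insert a S. g a * f (ev a) c) = (\<lambda>c. g a * f (ev a) c + (\<Sum>a\<in>S. g a * f (ev a) c))"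
    using insert(1,2) by (simp add: sum.insert)
  show ?case unfolding e1 e2 e3 insert(3) lin1[OF l] ..
qed

lemma rep: "x \<in> carrier \<Longrightarrow> x = (\<lambda>c. \<Sum>a\<in>supp x. x a * ev a c)"
proof
  fix c assume "x \<in> carrier"
  have "(\<Sum>a\<in>supp x. x a * ev a c) = (\<Sum>a\<in>supp x. if a = c then x a else 0)"
    by (rule sum.cong) (auto simp: ev_eq)
  also have "\<dots> = x c" using \<open>x \<in> carrier\<close> by (simp add: sum.delta' supp_def carrier_def)
  finally show "x c = (\<Sum>a\<in>supp x. x a * ev a c)" by simp
qed

lemma finite_supp: "x \<in> carrier \<Longrightarrow> finite (supp x)"
  unfolding carrier_def supp_def by simp

lemma lin_rep: "is_linear f \<Longrightarrow> x \<in> carrier \<Longrightarrow> f x c = (\<Sum>a\<in>supp x. x a * f (ev a) c)"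
proof -
  assume l: "is_linear f" and x: "x \<in> carrier"
  have "f x = f (\<lambda>c. \<Sum>a\<in>supp x. x a * ev a c)" using rep[OF x] by simp
  also have "\<dots> = (\<lambda>c. \<Sum>a\<in>supp x. x a * f (ev a) c)" by (rule lin_sum[OF l finite_supp[OF x]])
  finally show ?thesis by simp
qed

lemma lin_eq: "is_linear f \<Longrightarrow> is_linear g \<Longrightarrow> (\<And>b. f (ev b) = g (ev b)) \<Longrightarrow> x \<in> carrier \<Longrightarrow> f x = g x"
proof (rule ext)
  fix c assume lf: "is_linear f" and lg: "is_linear g" and e: "\<And>b. f (ev b) = g (ev b)" and x: "x \<in> carrier"
  have "f x c = (\<Sum>a\<in>supp x. x a * f (ev a) c)" by (rule lin_rep[OF lf x])
  also have "\<dots> = (\<Sum>a\<in>supp x. x a * g (ev a) c)" using e by simp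
  also have "\<dots> = g x c" by (rule lin_rep[OF lg x, symmetric])
  finally show "f x c = g x c" .
qed


lemma carrier_zero[simp]: "(\<lambda>c. 0) \<in> carrier" unfolding carrier_def by simp

lemma carrier_sum_gen:
  assumes "finite I" shows "(\<forall>i\<in>I. u i \<in> carrier) \<Longrightarrow> (\<lambda>c. \<Sum>i\<in>I. k i * u i c) \<in> carrier"
  using assms
proof (induction I rule: finite_induct)
  case empty then show ?case by simp
next
  case (insert a I)
  have "(\<lambda>c. k a * u a c + (\<Sum>i\<in>I. k i * u i c)) \<in> carrier"
    using insert carrier_add[of "\<lambda>c. k a * u a c" "\<lambda>c. \<Sum>i\<in>I. k i * u i c"] by simp
  then show ?case using insert(1,2) by (simp add: sum.insert)
qed

lemma lin_sum_gen:
  assumes l: "is_linear f" and fin: "finite I"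
  shows "(\<forall>i\<in>I. u i \<in> carrier) \<Longrightarrow> f (\<lambda>c. \<Sum>i\<in>I. k i * u i c) = (\<lambda>c. \<Sum>i\<in>I. k i * f (u i) c)"
  using fin
proof (induction I rule: finite_induct)
  case empty
  then show ?case using lin0[OF l] by simp
next
  case (insert a I)
  have e1: "(\<lambda>c. \<Sum>i\<in>insert a I. k i * u i c) = (\<lambda>c. k a * u a c + (\<Sum>i\<in>I. k i * u i c))"
    using insert(1,2) by (simp add: sum.insert)
  have e2: "f (\<lambda>c. k a * u a c + (\<Sum>i\<in>I. k i * u i c)) = (\<lambda>c. f (\<lambda>c. k a * u a c) c + f (\<lambda>c. \<Sum>i\<in>I. k i * u i c) c)"
    by (rule lin_add[OF l]) (use insert(4) carrier_sum_gen[OF insert(1)] in auto)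
  have e3: "(\<lambda>c. \<Sum>i\<in>insert a I. k i * f (u i) c) = (\<lambda>c. k a * f (u a) c + (\<Sum>i\<in>I. k i * f (u i) c))"
    using insert(1,2) by (simp add: sum.insert)
  have e4: "f (\<lambda>c. k a * u a c) = (\<lambda>c. k a * f (u a) c)" using lin_smult[OF l] insert(4) by simp
  show ?case unfolding e1 e2 e3 e4 using insert(3,4) by simp
qed

lemma br_sub:
  assumes "finite S" "finite T" "supp x \<subseteq> S" "supp y \<subseteq> T"
  shows "br lam mu x y c = (\<Sum>a\<in>S. \<Sum>b\<in>T. x a * y b * brb lam mu a b c)"
proof -
  have "br lam mu x y c = (\<Sum>a\<in>supp x. \<Sum>b\<in>supp y. x a * y b * brb lam mu a b c)"
    unfolding br_def by simp
  also have "\<dots> = (\<Sum>a\<in>supp x. \<Sum>b\<in>T. x a * y b * brb lam mu a b c)"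
    by (rule sum.cong[OF refl], rule sum.mono_neutral_left) (use assms in \<open>auto simp: supp_def\<close>)
  also have "\<dots> = (\<Sum>a\<in>S. \<Sum>b\<in>T. x a * y b * brb lam mu a b c)"
    by (rule sum.mono_neutral_left) (use assms in \<open>auto simp: supp_def\<close>)
  finally show ?thesis .
qed

lemma supp_add: "supp (\<lambda>c. u c + v c) \<subseteq> supp u \<union> supp v" unfolding supp_def by auto
lemma supp_smult: "supp (\<lambda>c. k * u c) \<subseteq> supp u" unfolding supp_def by auto

lemma br_addl: "u \<in> carrier \<Longrightarrow> v \<in> carrier \<Longrightarrow> y \<in> carrier \<Longrightarrow>
   br lam mu (\<lambda>c. u c + v c) y c = br lam mu u y c + br lam mu v y c"
proof -
  assume u: "u \<in> carrier" and v: "v \<in> carrier" and y: "y \<in> carrier"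
  let ?S = "supp u \<union> supp v"
  have f: "finite ?S" "finite (supp y)" using u v y finite_supp by auto
  have "br lam mu (\<lambda>c. u c + v c) y c = (\<Sum>a\<in>?S. \<Sum>b\<in>supp y. (u a + v a) * y b * brb lam mu a b c)"
    by (rule br_sub[OF f]) (use supp_add in auto)
  also have "\<dots> = (\<Sum>a\<in>?S. \<Sum>b\<in>supp y. u a * y b * brb lam mu a b c) + (\<Sum>a\<in>?S. \<Sum>b\<in>supp y. v a * y b * brb lam mu a b c)"
    by (simp add: distrib_right sum.distrib)
  also have "\<dots> = br lam mu u y c + br lam mu v y c"
    using br_sub[OF f, of u y] br_sub[OF f, of v y] by auto
  finally show ?thesis .
qed

lemma br_addr: "u \<in> carrier \<Longrightarrow> v \<in> carrier \<Longrightarrow> x \<in> carrier \<Longrightarrow>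
   br lam mu x (\<lambda>c. u c + v c) c = br lam mu x u c + br lam mu x v c"
proof -
  assume u: "u \<in> carrier" and v: "v \<in> carrier" and x: "x \<in> carrier"
  let ?S = "supp u \<union> supp v"
  have f: "finite (supp x)" "finite ?S" using u v x finite_supp by auto
  have "br lam mu x (\<lambda>c. u c + v c) c = (\<Sum>a\<in>supp x. \<Sum>b\<in>?S. x a * (u b + v b) * brb lam mu a b c)"
    by (rule br_sub[OF f]) (use supp_add in auto)
  also have "\<dots> = (\<Sum>a\<in>supp x. \<Sum>b\<in>?S. x a * u b * brb lam mu a b c) + (\<Sum>a\<in>supp x. \<Sum>b\<in>?S. x a * v b * brb lam mu a b c)"
    by (simp add: distrib_left distrib_right sum.distrib)
  also have "\<dots> = br lam mu x u c + br lam mu x v c"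
    using br_sub[OF f, of x u] br_sub[OF f, of x v] by auto
  finally show ?thesis .
qed

lemma br_smultl: "u \<in> carrier \<Longrightarrow> y \<in> carrier \<Longrightarrow> br lam mu (\<lambda>c. k * u c) y c = k * br lam mu u y c"
proof -
  assume u: "u \<in> carrier" and y: "y \<in> carrier"
  have f: "finite (supp u)" "finite (supp y)" using u y finite_supp by auto
  have "br lam mu (\<lambda>c. k * u c) y c = (\<Sum>a\<in>supp u. \<Sum>b\<in>supp y. (k * u a) * y b * brb lam mu a b c)"
    by (rule br_sub[OF f]) (use supp_smult in auto)
  also have "\<dots> = k * br lam mu u y c"
    by (simp add: br_sub[OF f] sum_distrib_left mult.assoc)
  finally show ?thesis .
qed

lemma br_smultr: "u \<in> carrier \<Longrightarrow> x \<in> carrier \<Longrightarrow> br lam mu x (\<lambda>c. k * u c) c = k * br lam mu x u c"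
proof -
  assume u: "u \<in> carrier" and x: "x \<in> carrier"
  have f: "finite (supp x)" "finite (supp u)" using u x finite_supp by auto
  have "br lam mu x (\<lambda>c. k * u c) c = (\<Sum>a\<in>supp x. \<Sum>b\<in>supp u. x a * (k * u b) * brb lam mu a b c)"
    by (rule br_sub[OF f]) (use supp_smult in auto)
  also have "\<dots> = k * br lam mu x u c"
    by (simp add: br_sub[OF f] sum_distrib_left algebra_simps)
  finally show ?thesis .
qed

lemma br_zerol: "br lam mu (\<lambda>c. 0) y c = 0" unfolding br_def supp_def by simp
lemma br_zeror: "br lam mu x (\<lambda>c. 0) c = 0" unfolding br_def supp_def by simp

lemma br_suml:
  assumes fin: "finite I" and y: "y \<in> carrier"
  shows "(\<forall>i\<in>I. u i \<in> carrier) \<Longrightarrow> br lam mu (\<lambda>c. \<Sum>i\<in>I. k i * u i c) y c = (\<Sum>i\<in>I. k i * br lam mu (u i) y c)"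
  using fin
proof (induction I rule: finite_induct)
  case empty then show ?case by (simp add: br_zerol)
next
  case (insert a I)
  have e1: "(\<lambda>c. \<Sum>i\<in>insert a I. k i * u i c) = (\<lambda>c. k a * u a c + (\<Sum>i\<in>I. k i * u i c))"
    using insert(1,2) by (simp add: sum.insert)
  have "br lam mu (\<lambda>c. k a * u a c + (\<Sum>i\<in>I. k i * u i c)) y c
     = br lam mu (\<lambda>c. k a * u a c) y c + br lam mu (\<lambda>c. \<Sum>i\<in>I. k i * u i c) y c"
    by (rule br_addl) (use insert(4) carrier_sum_gen[OF insert(1)] y in auto)
  then show ?case unfolding e1 using insert br_smultl[of "u a" y] y by (simp add: sum.insert)
qed

lemma br_sumr:
  assumes fin: "finite I" and x: "x \<in> carrier"
  shows "(\<forall>i\<in>I. u i \<in> carrier) \<Longrightarrow> br lam mu x (\<lambda>c. \<Sum>i\<in>I. k i * u i c) c = (\<Sum>i\<in>I. k i * br lam mu x (u i) c)"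
  using fin
proof (induction I rule: finite_induct)
  case empty then show ?case by (simp add: br_zeror)
next
  case (insert a I)
  have e1: "(\<lambda>c. \<Sum>i\<in>insert a I. k i * u i c) = (\<lambda>c. k a * u a c + (\<Sum>i\<in>I. k i * u i c))"
    using insert(1,2) by (simp add: sum.insert)
  have "br lam mu x (\<lambda>c. k a * u a c + (\<Sum>i\<in>I. k i * u i c)) c
     = br lam mu x (\<lambda>c. k a * u a c) c + br lam mu x (\<lambda>c. \<Sum>i\<in>I. k i * u i c) c"
    by (rule br_addr) (use insert(4) carrier_sum_gen[OF insert(1)] x in auto)
  then show ?case unfolding e1 using insert br_smultr[of "u a" x] x by (simp add: sum.insert)
qed


lemma carrier_ev1[simp]: "(\<lambda>c. k * ev b c) \<in> carrier"
  using carrier_smult[OF ev_carrier[of b], of k] by simp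
lemma carrier_ev2[simp]: "(\<lambda>c. k1 * ev b1 c + k2 * ev b2 c) \<in> carrier"
  using carrier_add[OF carrier_ev1[of k1 b1] carrier_ev1[of k2 b2]] by simp

lemma brb_carrier: "brb lam mu a b \<in> carrier"
  by (cases a; cases b) simp_all

lemma sum_half: "(\<Sum>a\<in>A. f a * (\<Sum>b\<in>B. g b * ((p a b + q a b)/2))) = ((\<Sum>a\<in>A. f a * (\<Sum>b\<in>B. g b * p a b)) + (\<Sum>a\<in>A. f a * (\<Sum>b\<in>B. g b * q a b))) / (2::complex)"
proof -
  have i: "(\<Sum>b\<in>B. g b * ((p a b + q a b)/2)) = ((\<Sum>b\<in>B. g b * p a b) + (\<Sum>b\<in>B. g b * q a b)) / 2" for a
  proof -
    have "(\<Sum>b\<in>B. g b * ((p a b + q a b)/2)) = (\<Sum>b\<in>B. (g b * p a b + g b * q a b) / 2)"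
      by (rule sum.cong[OF refl]) (simp add: ring_distribs)
    also have "\<dots> = ((\<Sum>b\<in>B. g b * p a b) + (\<Sum>b\<in>B. g b * q a b)) / 2"
      by (simp add: sum_divide_distrib[symmetric] sum.distrib)
    finally show ?thesis .
  qed
  have "(\<Sum>a\<in>A. f a * (\<Sum>b\<in>B. g b * ((p a b + q a b)/2))) = (\<Sum>a\<in>A. (f a * (\<Sum>b\<in>B. g b * p a b) + f a * (\<Sum>b\<in>B. g b * q a b)) / 2)"
    unfolding i by (simp add: ring_distribs)
  also have "\<dots> = ((\<Sum>a\<in>A. f a * (\<Sum>b\<in>B. g b * p a b)) + (\<Sum>a\<in>A. f a * (\<Sum>b\<in>B. g b * q a b))) / 2"
    by (simp add: sum_divide_distrib[symmetric] sum.distrib)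
  finally show ?thesis .
qed

lemma half_from_basis:
  assumes l: "is_linear T"
    and bas: "\<And>a b c. 2 * T (brb lam mu a b) c = br lam mu (T (ev a)) (ev b) c + br lam mu (ev a) (T (ev b)) c"
    and x: "x \<in> carrier" and y: "y \<in> carrier"
  shows "T (br lam mu x y) c = (br lam mu (T x) y c + br lam mu x (T y) c) / 2"
proof -
  let ?Sx = "supp x" and ?Sy = "supp y"
  have fx: "finite ?Sx" and fy: "finite ?Sy" using x y finite_supp by auto
  have Tev: "T (ev a) \<in> carrier" for a using l unfolding is_linear_def by simp
  define w where "w a = (\<lambda>c. \<Sum>b\<in>?Sy. y b * brb lam mu a b c)" for a
  have w: "w a \<in> carrier" for a unfolding w_def by (rule carrier_sum_gen[OF fy]) (simp add: brb_carrier)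
  have bxy: "br lam mu x y = (\<lambda>c. \<Sum>a\<in>?Sx. x a * w a c)"
    unfolding br_def w_def by (simp add: sum_distrib_left mult.assoc)
  have Tw: "T (w a) c = (\<Sum>b\<in>?Sy. y b * T (brb lam mu a b) c)" for a
    unfolding w_def using lin_sum_gen[OF l fy, of "brb lam mu a" y] brb_carrier by simp
  have L: "T (br lam mu x y) c = (\<Sum>a\<in>?Sx. x a * (\<Sum>b\<in>?Sy. y b * T (brb lam mu a b) c))"
    unfolding bxy using lin_sum_gen[OF l fx, of w x] w Tw by simp
  have Tx: "T x = (\<lambda>c. \<Sum>a\<in>?Sx. x a * T (ev a) c)"
    using rep[OF x] lin_sum[OF l fx, of x] by metis
  have Ty: "T y = (\<lambda>c. \<Sum>b\<in>?Sy. y b * T (ev b) c)"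
    using rep[OF y] lin_sum[OF l fy, of y] by metis
  have R1: "br lam mu (T x) y c = (\<Sum>a\<in>?Sx. x a * (\<Sum>b\<in>?Sy. y b * br lam mu (T (ev a)) (ev b) c))"
  proof -
    have "br lam mu (T x) y c = (\<Sum>a\<in>?Sx. x a * br lam mu (T (ev a)) y c)"
      unfolding Tx by (rule br_suml[OF fx y]) (simp add: Tev)
    also have "\<dots> = (\<Sum>a\<in>?Sx. x a * (\<Sum>b\<in>?Sy. y b * br lam mu (T (ev a)) (ev b) c))"
    proof (rule sum.cong[OF refl])
      fix a
      have "br lam mu (T (ev a)) y c = br lam mu (T (ev a)) (\<lambda>c. \<Sum>b\<in>?Sy. y b * ev b c) c"
        using rep[OF y] by metis
      also have "\<dots> = (\<Sum>b\<in>?Sy. y b * br lam mu (T (ev a)) (ev b) c)"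
        by (rule br_sumr[OF fy Tev]) simp
      finally show "x a * br lam mu (T (ev a)) y c = x a * (\<Sum>b\<in>?Sy. y b * br lam mu (T (ev a)) (ev b) c)"
        by simp
    qed
    finally show ?thesis .
  qed
  have R2: "br lam mu x (T y) c = (\<Sum>a\<in>?Sx. x a * (\<Sum>b\<in>?Sy. y b * br lam mu (ev a) (T (ev b)) c))"
  proof -
    have "br lam mu x (T y) c = (\<Sum>b\<in>?Sy. y b * br lam mu x (T (ev b)) c)"
      unfolding Ty by (rule br_sumr[OF fy x]) (simp add: Tev)
    also have "\<dots> = (\<Sum>b\<in>?Sy. y b * (\<Sum>a\<in>?Sx. x a * br lam mu (ev a) (T (ev b)) c))"
    proof (rule sum.cong[OF refl])
      fix b
      have "br lam mu x (T (ev b)) c = br lam mu (\<lambda>c. \<Sum>a\<in>?Sx. x a * ev a c) (T (ev b)) c"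
        using rep[OF x] by metis
      also have "\<dots> = (\<Sum>a\<in>?Sx. x a * br lam mu (ev a) (T (ev b)) c)"
        by (rule br_suml[OF fx Tev]) simp
      finally show "y b * br lam mu x (T (ev b)) c = y b * (\<Sum>a\<in>?Sx. x a * br lam mu (ev a) (T (ev b)) c)"
        by simp
    qed
    also have "\<dots> = (\<Sum>a\<in>?Sx. x a * (\<Sum>b\<in>?Sy. y b * br lam mu (ev a) (T (ev b)) c))"
      by (simp add: sum_distrib_left algebra_simps sum.swap[of _ ?Sy ?Sx])
    finally show ?thesis .
  qed
  have "T (br lam mu x y) c = (\<Sum>a\<in>?Sx. x a * (\<Sum>b\<in>?Sy. y b * ((br lam mu (T (ev a)) (ev b) c + br lam mu (ev a) (T (ev b)) c) / 2)))"
  proof -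
    have bas': "T (brb lam mu a b) c = (br lam mu (T (ev a)) (ev b) c + br lam mu (ev a) (T (ev b)) c) / 2" for a b
      using bas[of a b c] by (simp add: mult.commute)
    show ?thesis unfolding L bas' ..
  qed
  also have "\<dots> = (br lam mu (T x) y c + br lam mu x (T y) c) / 2"
    unfolding R1 R2 by (rule sum_half)
  finally show ?thesis .
qed


definition shb :: "int \<Rightarrow> basis \<Rightarrow> basis" where
  "shb j b = (case b of BL n \<Rightarrow> BM (n + j) | _ \<Rightarrow> b)"

lemma phi_ja_supp: "supp (phi_ja j alpha x) \<subseteq> shb j ` supp x"
proof
  fix c assume "c \<in> supp (phi_ja j alpha x)"
  then have nz: "phi_ja j alpha x c \<noteq> 0" by (simp add: supp_def)
  then obtain m where c: "c = BM m" and xm: "x (BL (m - j)) \<noteq> 0"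
    unfolding phi_ja_def by (cases c) auto
  have "c = shb j (BL (m - j))" using c by (simp add: shb_def)
  moreover have "BL (m - j) \<in> supp x" using xm by (simp add: supp_def)
  ultimately show "c \<in> shb j ` supp x" by blast
qed

lemma Tm_linear: "is_linear (\<lambda>x b. K * x b + phi_ja j alpha x b)"
  unfolding is_linear_def
proof (intro conjI ballI allI)
  fix x assume x: "x \<in> carrier"
  have "finite (shb j ` supp x)" using finite_supp[OF x] by simp
  then have "finite (supp (phi_ja j alpha x))" by (rule finite_subset[OF phi_ja_supp])
  then have "phi_ja j alpha x \<in> carrier" unfolding carrier_def supp_def by simp
  then show "(\<lambda>b. K * x b + phi_ja j alpha x b) \<in> carrier" using x by simp
next
  fix x y assume "x \<in> carrier" "y \<in> carrier"
  show "(\<lambda>b. K * (x b + y b) + phi_ja j alpha (\<lambda>b. x b + y b) b) = (\<lambda>b. K * x b + phi_ja j alpha x b + (K * y b + phi_ja j alpha y b))"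
  proof (rule ext)
    fix b show "K * (x b + y b) + phi_ja j alpha (\<lambda>b. x b + y b) b = K * x b + phi_ja j alpha x b + (K * y b + phi_ja j alpha y b)"
      by (cases b) (simp_all add: phi_ja_def algebra_simps)
  qed
next
  fix x c assume "x \<in> carrier"
  show "(\<lambda>b. K * (c * x b) + phi_ja j alpha (\<lambda>b. c * x b) b) = (\<lambda>b. c * (K * x b + phi_ja j alpha x b))"
  proof (rule ext)
    fix b show "K * (c * x b) + phi_ja j alpha (\<lambda>b. c * x b) b = c * (K * x b + phi_ja j alpha x b)"
      by (cases b) (simp_all add: phi_ja_def algebra_simps)
  qed
qed

lemma Tm_ev_BL: "(\<lambda>b. K * ev (BL n) b + phi_ja j alpha (ev (BL n)) b) = (\<lambda>c. K * ev (BL n) c + alpha * ev (BM (n+j)) c)"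
  unfolding phi_ja_def by (rule ext) (auto simp: ev_eq split: basis.split)

lemma Tm_ev_other: "\<forall>n. a \<noteq> BL n \<Longrightarrow> (\<lambda>b. K * ev a b + phi_ja j alpha (ev a) b) = (\<lambda>c. K * ev a c)"
  unfolding phi_ja_def by (rule ext) (auto simp: ev_eq split: basis.split)

lemma brT_l: "br lam mu (\<lambda>b. K * ev a b + phi_ja j alpha (ev a) b) (ev b) c
   = K * brb lam mu a b c + (case a of BL n \<Rightarrow> alpha * brb lam mu (BM (n+j)) b c | _ \<Rightarrow> 0)"
proof (cases "\<exists>n. a = BL n")
  case True
  then obtain n where a: "a = BL n" by blast
  show ?thesis unfolding a Tm_ev_BL
    by (simp add: br_addl br_smultl br_ev_ev)
next
  case False
  then have "\<forall>n. a \<noteq> BL n" by simp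
  then show ?thesis unfolding Tm_ev_other[OF \<open>\<forall>n. a \<noteq> BL n\<close>]
    by (cases a) (simp_all add: br_smultl br_ev_ev)
qed

lemma brT_r: "br lam mu (ev a) (\<lambda>c. K * ev b c + phi_ja j alpha (ev b) c) c
   = K * brb lam mu a b c + (case b of BL n \<Rightarrow> alpha * brb lam mu a (BM (n+j)) c | _ \<Rightarrow> 0)"
proof (cases "\<exists>n. b = BL n")
  case True
  then obtain n where b: "b = BL n" by blast
  show ?thesis unfolding b Tm_ev_BL
    by (simp add: br_addr br_smultr br_ev_ev)
next
  case False
  then have "\<forall>n. b \<noteq> BL n" by simp
  then show ?thesis unfolding Tm_ev_other[OF \<open>\<forall>n. b \<noteq> BL n\<close>]
    by (cases b) (simp_all add: br_smultr br_ev_ev)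
qed


lemma phi_ja_brb1: "2 * phi_ja j alpha (brb 1 mu a b) c =
    (case a of BL n \<Rightarrow> alpha * brb 1 mu (BM (n+j)) b c | _ \<Rightarrow> 0) + (case b of BL n \<Rightarrow> alpha * brb 1 mu a (BM (n+j)) c | _ \<Rightarrow> 0)"
  by (cases a; cases b; cases c) (auto simp: phi_ja_def ev_eq algebra_simps)


definition kap :: "int \<Rightarrow> complex" where "kap m = (of_int m ^ 3 - of_int m) / 12"

abbreviation SL :: "int \<Rightarrow> basis set" where "SL k \<equiv> {BL k, BM k, BC}"

lemma keyB0:
  fixes m n s l b K Bm Bn Bmn ix iy iz :: complex
  assumes x: "ix * (n - s) = 1" and y: "iy * (m - s) = 1" and z: "iz * (m + n - s) = 1"
   and e: "2 * ((n - m) * Bmn) = - Bm * (m + s - l * n) + Bn * (n + s - l * m)"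
   and bm: "Bm = l*b + K*iy" and bn: "Bn = l*b + K*ix" and bmn: "Bmn = l*b + K*iz"
  shows "(n - m) * (2*K*(n-s)*(m-s) + K*((2-l)*s - l*(n+m-2*s))*(m+n-s) - l*(l-1)*b*(n-s)*(m-s)*(m+n-s)) = 0"
  using x y z e unfolding bm bn bmn by algebra

lemma keyB:
  fixes m n s l b K Bm Bn Bmn :: complex
  assumes x: "n - s \<noteq> 0" and y: "m - s \<noteq> 0" and z: "m + n - s \<noteq> 0"
   and e: "2 * ((n - m) * Bmn) = - Bm * (m + s - l * n) + Bn * (n + s - l * m)"
   and bm: "Bm = l*b + K/(m-s)" and bn: "Bn = l*b + K/(n - s)" and bmn: "Bmn = l*b + K/(m+n-s)"
  shows "(n - m) * (2*K*(n-s)*(m-s) + K*((2-l)*s - l*(n+m-2*s))*(m+n-s) - l*(l-1)*b*(n-s)*(m-s)*(m+n-s)) = 0"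
  by (rule keyB0[OF _ _ _ e, of "inverse (n-s)" "inverse (m-s)" "inverse (m+n-s)" b K])
     (use x y z bm bn bmn in \<open>simp_all add: divide_inverse\<close>)

lemma finB:
  fixes s l b K P :: complex
  assumes g1: "(2*K*(2-s)*(1-s) + K*((2-l)*s - l*(3-2*s))*(3-s) - P*(2-s)*(1-s)*(3-s)) = 0"
  and g2: "(2*K*(4-s)*(-1-s) + K*((2-l)*s - l*(3-2*s))*(3-s) - P*(4-s)*(-1-s)*(3-s)) = 0"
  and g3: "(2*K*(4-s)*(1-s) + K*((2-l)*s - l*(5-2*s))*(5-s) - P*(4-s)*(1-s)*(5-s)) = 0"
  and g4: "(2*K*(6-s)*(-1-s) + K*((2-l)*s - l*(5-2*s))*(5-s) - P*(6-s)*(-1-s)*(5-s)) = 0"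
  shows "P = 0 \<and> K = 0"
proof -
  have "P = 0" using g1 g2 g3 g4 by algebra
  moreover have "K = 0" using g1 g2 `P = 0` by algebra
  ultimately show ?thesis by simp
qed

lemma eq_diff: "a = b \<Longrightarrow> a - b = (0::complex)" by simp

locale HD =
  fixes lam mu :: complex and j :: int and phi :: "(basis \<Rightarrow> complex) \<Rightarrow> (basis \<Rightarrow> complex)"
  assumes hd: "half_derivation lam mu phi" and dg: "has_degree2 (2*j) phi"
begin

lemma lin: "is_linear phi" using hd unfolding half_derivation_def by blast

lemma main: "2 * phi (brb lam mu a b) c = br lam mu (phi (ev a)) (ev b) c + br lam mu (ev a) (phi (ev b)) c"
proof -
  have "phi (br lam mu (ev a) (ev b)) = (\<lambda>c. (br lam mu (phi (ev a)) (ev b) c + br lam mu (ev a) (phi (ev b)) c) / 2)"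
    using hd unfolding half_derivation_def by simp
  then show ?thesis by (simp add: br_ev_ev fun_eq_iff field_simps)
qed

lemma homog_ev: "homog (deg2 a) (ev a)"
proof -
  have "ev a \<in> carrier" by simp
  moreover have "\<forall>b. ev a b \<noteq> 0 \<longrightarrow> deg2 b = deg2 a" by (simp add: ev_def)
  ultimately show ?thesis unfolding homog_def by blast
qed

lemma homog_phi: "homog (deg2 a + 2 * j) (phi (ev a))"
proof -
  have "\<forall>k x. homog k x \<longrightarrow> homog (k + 2*j) (phi x)" using dg unfolding has_degree2_def .
  then show ?thesis using homog_ev[of a] by blast
qed

lemma deg: "phi (ev a) c \<noteq> 0 \<Longrightarrow> deg2 c = deg2 a + 2 * j"
  using homog_phi[of a] unfolding homog_def by blast

lemma supp_L: "supp (phi (ev (BL n))) \<subseteq> SL (n+j)"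
proof
  fix c assume "c \<in> supp (phi (ev (BL n)))"
  then have "deg2 c = 2*n + 2*j" using deg[of "BL n" c] by (simp add: supp_def)
  then show "c \<in> SL (n+j)" by (cases c) (auto, presburger+)
qed

lemma supp_M: "supp (phi (ev (BM n))) \<subseteq> SL (n+j)"
proof
  fix c assume "c \<in> supp (phi (ev (BM n)))"
  then have "deg2 c = 2*n + 2*j" using deg[of "BM n" c] by (simp add: supp_def)
  then show "c \<in> SL (n+j)" by (cases c) (auto, presburger+)
qed

lemma supp_C: "supp (phi (ev BC)) \<subseteq> SL j"
proof
  fix c assume "c \<in> supp (phi (ev BC))"
  then have "deg2 c = 2*j" using deg[of "BC" c] by (simp add: supp_def)
  then show "c \<in> SL j" by (cases c) (auto, presburger+)
qed

lemma supp_Y: "supp (phi (ev (BY n))) \<subseteq> {BY (n+j)}"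
proof
  fix c assume "c \<in> supp (phi (ev (BY n)))"
  then have "deg2 c = 2*n + 1 + 2*j" using deg[of "BY n" c] by (simp add: supp_def)
  then show "c \<in> {BY (n+j)}" by (cases c) (auto, presburger+)
qed

lemma LC0: "n + j \<noteq> 0 \<Longrightarrow> phi (ev (BL n)) BC = 0"
  using deg[of "BL n" BC] by auto
lemma MC0: "n + j \<noteq> 0 \<Longrightarrow> phi (ev (BM n)) BC = 0"
  using deg[of "BM n" BC] by auto
lemma CC0: "j \<noteq> 0 \<Longrightarrow> phi (ev BC) BC = 0"
  using deg[of "BC" BC] by auto

lemmas bl = br_left_sum[OF _ supp_L] br_left_sum[OF _ supp_M] br_left_sum[OF _ supp_C] br_left_sum[OF _ supp_Y]
lemmas brr = br_right_sum[OF _ supp_L] br_right_sum[OF _ supp_M] br_right_sum[OF _ supp_C] br_right_sum[OF _ supp_Y]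



abbreviation "A n \<equiv> phi (ev (BL n)) (BL (n+j))"
abbreviation "B n \<equiv> phi (ev (BL n)) (BM (n+j))"
abbreviation "Ec n \<equiv> phi (ev (BL n)) BC"
abbreviation "P n \<equiv> phi (ev (BM n)) (BL (n+j))"
abbreviation "Q n \<equiv> phi (ev (BM n)) (BM (n+j))"
abbreviation "F n \<equiv> phi (ev (BM n)) BC"
abbreviation "Yv n \<equiv> phi (ev (BY n)) (BY (n+j))"
abbreviation "CL \<equiv> phi (ev BC) (BL j)"
abbreviation "CM \<equiv> phi (ev BC) (BM j)"
abbreviation "CC \<equiv> phi (ev BC) BC"


lemma E4: "2 * (of_int (n-m) * B (m+n) + (if m+n=0 then kap m * phi (ev BC) (BM (m+n+j)) else 0))
   = - B m * (of_int (m+j) - lam * of_int n + 2 * mu) + B n * (of_int (n+j) - lam * of_int m + 2*mu)"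
  using main[of "BL m" "BL n" "BM (m+n+j)"] by (simp only: brb.simps lin2[OF lin] lin1[OF lin] lin0[OF lin] bl brr finite.intros) (simp add: ev_eq algebra_simps kap_def split: if_splits)

lemma E5: "2 * (of_int (n-m) * A (m+n) + (if m+n=0 then kap m * phi (ev BC) (BL (m+n+j)) else 0))
   = A m * of_int (n - m - j) + A n * of_int (n + j - m)"
  using main[of "BL m" "BL n" "BL (m+n+j)"] by (simp only: brb.simps lin2[OF lin] lin1[OF lin] lin0[OF lin] bl brr finite.intros) (simp add: ev_eq algebra_simps kap_def split: if_splits)

lemma E6: "2 * (of_int (n-m) * Ec (m+n) + (if m+n=0 then kap m * CC else 0))
   = A m * (if m+j+n=0 then kap (m+j) else 0) + A n * (if m+n+j=0 then kap m else 0)"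
  using main[of "BL m" "BL n" "BC"] by (simp only: brb.simps lin2[OF lin] lin1[OF lin] lin0[OF lin] bl brr finite.intros) (simp add: ev_eq algebra_simps kap_def split: if_splits)

lemma E3: "2 * (of_int n - lam * of_int m + 2*mu) * Q (m+n)
   = A m * (of_int n - lam * of_int (m+j) + 2*mu) + Q n * (of_int (n+j) - lam * of_int m + 2*mu)"
  using main[of "BL m" "BM n" "BM (m+n+j)"] by (simp only: brb.simps lin2[OF lin] lin1[OF lin] lin0[OF lin] bl brr finite.intros) (simp add: ev_eq algebra_simps kap_def split: if_splits)

lemma E1: "2 * (of_int n + 1/2 - (lam+1)/2 * of_int m + mu) * Yv (m+n)
   = A m * (of_int n + 1/2 - (lam+1)/2 * of_int (m+j) + mu) + Yv n * (of_int (n+j) + 1/2 - (lam+1)/2 * of_int m + mu)"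
  using main[of "BL m" "BY n" "BY (m+n+j)"] by (simp only: brb.simps lin2[OF lin] lin1[OF lin] lin0[OF lin] bl brr finite.intros) (simp add: ev_eq algebra_simps kap_def split: if_splits)

lemma E7: "2 * of_int (n-m) * Q (m+n+1) = Yv m * of_int (n - m - j) + Yv n * of_int (n + j - m)"
  using main[of "BY m" "BY n" "BM (m+n+1+j)"] by (simp only: brb.simps lin2[OF lin] lin1[OF lin] lin0[OF lin] bl brr finite.intros) (simp add: ev_eq algebra_simps kap_def split: if_splits)

lemma E7P: "of_int (n-m) * P (m+n+1) = 0"
  using main[of "BY m" "BY n" "BL (m+n+1+j)"] by (simp only: brb.simps lin2[OF lin] lin1[OF lin] lin0[OF lin] bl brr finite.intros) (simp add: ev_eq algebra_simps kap_def split: if_splits)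

lemma E7F: "of_int (n-m) * F (m+n+1) = 0"
  using main[of "BY m" "BY n" "BC"] by (simp only: brb.simps lin2[OF lin] lin1[OF lin] lin0[OF lin] bl brr finite.intros) (simp add: ev_eq algebra_simps kap_def split: if_splits)



lemma m1_of_int[simp]: "((-1::complex) = of_int k) = (k = -1)"
  by (metis of_int_eq_iff of_int_minus of_int_1)

lemma P0: "P k = 0"
proof (cases "k = -1")
  case True
  then show ?thesis using E7P[of 0 "-2"] by simp
next
  case False
  then show ?thesis using E7P[of "-1" k] by simp
qed

lemma F0: "F k = 0"
proof (cases "k = -1")
  case True
  then show ?thesis using E7F[of 0 "-2"] by simp
next
  case False
  then show ?thesis using E7F[of "-1" k] by simp
qed

lemma kap_neg[simp]: "kap (-m) = - kap m" by (simp add: kap_def field_simps power3_eq_cube)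
lemma kap0[simp]: "kap 0 = 0" by (simp add: kap_def)
lemma if_kap0[simp]: "(if c then kap 0 * x else 0) = 0" by simp
lemma kap1[simp]: "kap 1 = 0" by (simp add: kap_def)
lemma kap2[simp]: "kap 2 = 1/2" by (simp add: kap_def)

lemma A_gen: "n \<noteq> j \<Longrightarrow> A n = A 0"
proof -
  assume h: "n \<noteq> j"
  have "2 * (of_int n * A n) = A 0 * of_int (n - j) + A n * of_int (n + j)"
    using E5[of 0 n] by (auto simp: algebra_simps split: if_splits)
  then have "(of_int n - of_int j) * (A n - A 0) = 0" by (simp add: algebra_simps)
  with h show ?thesis by simp
qed


abbreviation "astar \<equiv> (if j = 0 then phi (ev (BL 0)) (BL j) else 0)"

lemma Ec_e1: "-2 * of_int j * Ec (-j) = A 0 * kap j"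
  using E6[of 0 "-j"] by (auto simp: algebra_simps split: if_splits)

lemma A_j0: "j \<noteq> 0 \<Longrightarrow> A 0 = 0"
proof -
  assume j: "j \<noteq> 0"
  have h1: "A (2*j) = A 0" by (rule A_gen) (use j in simp)
  have h2: "A (-3*j) = A 0" by (rule A_gen) (use j in simp)
  have e2: "-10 * of_int j * Ec (-j) = A 0 * (kap (3*j) + kap (2*j))"
    using E6[of "2*j" "-3*j", unfolded h1 h2] apply (simp add: j split: if_splits)
    subgoal premises p using p[THEN eq_diff] by algebra
    done
  have "A 0 * (kap (3*j) + kap (2*j) - 5 * kap j) = 0" using e2 Ec_e1 by algebra
  moreover have "kap (3*j) + kap (2*j) - 5 * kap j = 5/2 * of_int j ^ 3"
    by (simp add: kap_def field_simps power3_eq_cube)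
  ultimately show "A 0 = 0" using j by simp
qed

lemma A_all: "A n = astar"
proof (cases "j = 0")
  case True
  then show ?thesis using A_gen[of n] by (cases "n = 0") (auto simp:)
next
  case False
  show ?thesis
  proof (cases "n = j")
    case True
    have "A (4*j) = 0" "A (3*j) = 0" using A_gen[of "4*j"] A_gen[of "3*j"] A_j0 False by auto
    then have "0 = A j * of_int (- j)"
      using E5[of "3*j" j] False by (auto simp: algebra_simps split: if_splits)
    then show ?thesis using True False by (simp add:)
  next
    case nj: False
    then show ?thesis using A_gen[of n] A_j0 False by (simp add:)
  qed
qed

lemma Ec_all: "Ec n = 0"
proof (cases "n + j = 0")
  case False
  then show ?thesis by (rule LC0)
next
  case True
  show ?thesis
  proof (cases "j = 0")
    case False
    have "A 0 = 0" using A_j0 False by simp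
    then have "Ec (-j) = 0" using Ec_e1 False by simp
    moreover have "n = -j" using True by simp
    ultimately show ?thesis by simp
  next
    case j0: True
    have "4 * Ec 0 = 0" using E6[of "-1" 1] j0 by (auto simp: algebra_simps split: if_splits)
    then show ?thesis using True j0 by simp
  qed
qed

lemma CC_val: "CC = astar"
proof (cases "j = 0")
  case False
  then show ?thesis using CC0 by simp
next
  case True
  obtain a where a: "astar = a" by simp
  have e: "2 * (4 * Ec 0 + kap (-2) * CC) = a * kap (-2) + a * kap (-2)"
    using E6[of "-2" 2, unfolded A_all a] apply (simp add: True)
    subgoal premises p using p[THEN eq_diff] by algebra
    done
  have "Ec 0 = 0" by (rule Ec_all)
  with e have "CC = a" by simp
  then show ?thesis using a by simp
qed

lemma CL0: "CL = 0"
proof -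
  obtain a where a: "astar = a" by simp
  have "2 * (4 * a + kap (-2) * CL) = a * of_int (4 - j) + a * of_int (4 + j)"
    using E5[of "-2" 2, unfolded A_all a] apply simp
    subgoal premises p using p[THEN eq_diff] by algebra
    done
  then show ?thesis apply simp
    subgoal premises p using p[THEN eq_diff] by algebra
    done
qed


lemma Y_gen: "(of_int n + 1/2 + mu - of_int j) * (Yv n - astar) = 0"
proof (cases "j = 0")
  case True
  obtain a where a: "astar = a" by simp
  have "2 * (of_int n + 1/2 + mu) * Yv n = a * (of_int n + 1/2 + mu) + Yv n * (of_int n + 1/2 + mu)"
    using E1[where m=0 and n=n, unfolded A_all a] by (simp add: True)
  then have "(of_int n + 1/2 + mu - of_int j) * (Yv n - a) = 0" apply (simp add: True)
    subgoal premises p using p[THEN eq_diff] by algebra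
    done
  then show ?thesis using a by simp
next
  case False
  have "2 * (of_int n + 1/2 + mu) * Yv n = Yv n * (of_int n + of_int j + 1/2 + mu)"
    using E1[where m=0 and n=n, unfolded A_all] by (simp add: False)
  then have "(of_int n + 1/2 + mu - of_int j) * (Yv n - 0) = 0" by algebra
  then show ?thesis using False by simp
qed

lemma Y_all:
  assumes ny: "\<And>n. of_int n + 1/2 + mu = of_int j \<Longrightarrow> lam \<noteq> -1"
  shows "Yv n = astar"
proof (cases "of_int n + 1/2 + mu - of_int j = (0::complex)")
  case False
  then show ?thesis using Y_gen[of n] by simp
next
  case sp: True
  obtain a where a: "astar = a" by simp
  have Yt: "Yv (t + n) = a" if "t \<noteq> 0" for t
  proof -
    have "(of_int t + of_int n + 1/2 + mu - of_int j) = (of_int t :: complex)"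
      using sp by (simp add: algebra_simps)
    then have E: "(of_int t :: complex) = (of_int t + of_int n + 1/2 + mu) - of_int j" by simp
    have "of_int t + of_int n + 1/2 + mu \<noteq> (of_int j :: complex)"
    proof
      assume X: "of_int t + of_int n + 1/2 + mu = (of_int j :: complex)"
      have "(of_int t :: complex) = 0" using E unfolding X by simp
      then show False using that by simp
    qed
    then show ?thesis using Y_gen[of "t+n"] a by simp
  qed
  have H: "2 * (of_int n + 1/2 - (lam+1)/2 * of_int t + mu) * a
     = a * (of_int n + 1/2 - (lam+1)/2 * of_int (t+j) + mu) + Yv n * (of_int (n+j) + 1/2 - (lam+1)/2 * of_int t + mu)"
    if "t \<noteq> 0" for t
    using E1[where m=t and n=n, unfolded A_all a Yt[OF that]] by simp
  show ?thesis
  proof (cases "j = 0")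
    case True
    have sp': "of_int n + 1/2 + mu = of_int j" using sp by (metis eq_iff_diff_eq_0)
    have l: "lam \<noteq> -1" by (rule ny[OF sp'])
    have "2 * (of_int n + 1/2 - (lam+1)/2 + mu) * a
     = a * (of_int n + 1/2 - (lam+1)/2 + mu) + Yv n * (of_int n + 1/2 - (lam+1)/2 + mu)"
      using H[of 1] by (simp add: True)
    moreover have mu_eq0: "mu = - of_int n - 1/2"
    proof -
      have "mu = of_int j - of_int n - 1/2" using sp by (simp add: algebra_simps)
      then show ?thesis using True by simp
    qed
    ultimately have "(lam + 1) * (Yv n - a) = 0" by algebra
    moreover have "lam + 1 \<noteq> 0" using l by (simp add: add_eq_0_iff2)
    ultimately show ?thesis using a by simp
  next
    case False
    have a0: "a = 0" using a False by simp
    have mu_eq: "mu = of_int j - of_int n - 1/2" using sp by (simp add: algebra_simps)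
    have Z: "Yv n * (2 * of_int j - (lam+1)/2 * of_int t) = 0" if "t \<noteq> 0" for t
    proof -
      have "Yv n * (of_int (n+j) + 1/2 - (lam+1)/2 * of_int t + mu) = 0" using H[OF that] unfolding a0 by simp
      moreover have "of_int (n+j) + 1/2 - (lam+1)/2 * of_int t + mu = 2 * of_int j - (lam+1)/2 * of_int t"
        by (simp add: mu_eq)
      ultimately show ?thesis by metis
    qed
    have "Yv n = 0"
    proof (cases "(lam + 1) / 2 = 2 * of_int j")
      case True
      then have "2 * of_int j - (lam+1)/2 * of_int 2 \<noteq> (0::complex)" using False by simp
      then show ?thesis using Z[of 2] by simp
    next
      case ne: False
      then have "2 * of_int j - (lam+1)/2 * of_int 1 \<noteq> (0::complex)" by simp
      then show ?thesis using Z[of 1] by simp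
    qed
    then show ?thesis using False by simp
  qed
qed


abbreviation "sB \<equiv> of_int j + 2 * mu"

lemma B_rel: "(of_int n - sB) * B n = B 0 * (lam * of_int n - sB)"
  using E4[where m=0 and n=n] apply simp
  subgoal premises p using p[THEN eq_diff] by algebra
  done

lemma B_lam1_gen: "lam = 1 \<Longrightarrow> of_int n \<noteq> sB \<Longrightarrow> B n = B 0"
proof -
  assume l: "lam = 1" and ns: "of_int n \<noteq> sB"
  have "(of_int n - sB) * (B n - B 0) = 0" using B_rel[of n] unfolding l by (simp add: algebra_simps)
  then show ?thesis using ns by simp
qed

lemma B_lam1: "lam = 1 \<Longrightarrow> B n = B 0"
proof -
  assume l: "lam = 1"
  show ?thesis
  proof (cases "of_int n = sB")
    case False
    then show ?thesis using B_lam1_gen[OF l] by simp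
  next
    case True
    show ?thesis
    proof (cases "n = 0")
      case True then show ?thesis by simp
    next
      case n0: False
      have "of_int (3*n+n) \<noteq> sB" unfolding True[symmetric] using n0 by simp
      then have h1: "B (3*n+n) = B 0" using B_lam1_gen[OF l, of "3*n+n"] by simp
      have "of_int (3*n) \<noteq> sB" unfolding True[symmetric] using n0 by simp
      then have h2: "B (3*n) = B 0" using B_lam1_gen[OF l, of "3*n"] by simp
      have c: "(3*n + n = 0) = False" using n0 by simp
      have "of_int n * (B n - B 0) = 0"
        using E4[where m="3*n" and n=n, unfolded h1 h2 c if_False] True[symmetric] apply (simp add: l del: mult_eq_0_iff)
        subgoal premises p using p[THEN eq_diff] by algebra
        done
      then show ?thesis using n0 by simp
    qed
  qed
qed


lemma B_rel2: "(of_int k - sB) * (B k - lam * B 0) = B 0 * sB * (lam - 1)"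
  using B_rel[of k] by algebra

lemma B_nonint:
  assumes ns: "\<And>k. of_int k \<noteq> sB"
  shows "B k = lam * B 0 + B 0 * sB * (lam - 1) / (of_int k - sB)"
proof -
  have "of_int k - sB \<noteq> 0" using ns[of k] by simp
  then show ?thesis using B_rel2[of k] by (simp add: field_simps)
qed

lemma Gm:
  assumes ns: "\<And>k. of_int k \<noteq> sB" and mn: "m + n \<noteq> 0"
  shows "(of_int n - of_int m) * (2*(B 0 * sB * (lam - 1))*(of_int n-sB)*(of_int m-sB)
     + (B 0 * sB * (lam - 1))*((2-lam)*sB - lam*(of_int n+of_int m-2*sB))*(of_int m+of_int n-sB)
     - lam*(lam-1)*B 0*(of_int n-sB)*(of_int m-sB)*(of_int m+of_int n-sB)) = 0"
proof (rule keyB)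
  show "of_int n - sB \<noteq> 0" using ns[of n] by simp
  show "of_int m - sB \<noteq> 0" using ns[of m] by simp
  show "of_int m + of_int n - sB \<noteq> 0" using ns[of "m+n"] by simp
  show "B m = lam * B 0 + B 0 * sB * (lam - 1) / (of_int m - sB)" by (rule B_nonint[OF ns])
  show "B n = lam * B 0 + B 0 * sB * (lam - 1) / (of_int n - sB)" by (rule B_nonint[OF ns])
  show "B (m+n) = lam * B 0 + B 0 * sB * (lam - 1) / (of_int m + of_int n - sB)"
    using B_nonint[OF ns, of "m+n"] by simp
  have c: "(m + n = 0) = False" using mn by simp
  show "2 * ((of_int n - of_int m) * B (m+n)) = - B m * (of_int m + sB - lam * of_int n) + B n * (of_int n + sB - lam * of_int m)"
    using E4[where m=m and n=n, unfolded c if_False] by (simp add: algebra_simps)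
qed


lemma B_nonint0:
  assumes l: "lam \<noteq> 1" and ns: "\<And>k. of_int k \<noteq> sB"
  shows "B n = 0"
proof -
  define K where "K = B 0 * sB * (lam - 1)"
  define P where "P = lam * (lam - 1) * B 0"
  have g1: "(2*K*(2-sB)*(1-sB) + K*((2-lam)*sB - lam*(3-2*sB))*(3-sB) - P*(2-sB)*(1-sB)*(3-sB)) = 0"
    using Gm[OF ns, of 1 2] unfolding K_def P_def by (simp add: algebra_simps)
  have g2: "(2*K*(4-sB)*(-1-sB) + K*((2-lam)*sB - lam*(3-2*sB))*(3-sB) - P*(4-sB)*(-1-sB)*(3-sB)) = 0"
    using Gm[OF ns, of "-1" 4] unfolding K_def P_def apply (simp add: algebra_simps)
    subgoal premises p using p[THEN eq_diff] by algebra
    done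
  have g3: "(2*K*(4-sB)*(1-sB) + K*((2-lam)*sB - lam*(5-2*sB))*(5-sB) - P*(4-sB)*(1-sB)*(5-sB)) = 0"
    using Gm[OF ns, of 1 4] unfolding K_def P_def apply (simp add: algebra_simps)
    subgoal premises p using p[THEN eq_diff] by algebra
    done
  have g4: "(2*K*(6-sB)*(-1-sB) + K*((2-lam)*sB - lam*(5-2*sB))*(5-sB) - P*(6-sB)*(-1-sB)*(5-sB)) = 0"
    using Gm[OF ns, of "-1" 6] unfolding K_def P_def apply (simp add: algebra_simps)
    subgoal premises p using p[THEN eq_diff] by algebra
    done
  have "K = 0" using finB[OF g1 g2 g3 g4] by simp
  moreover have "sB \<noteq> 0" using ns[of 0] by simp
  moreover have "lam - 1 \<noteq> 0" using l by simp
  ultimately have b0: "B 0 = 0" unfolding K_def by simp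
  show ?thesis using B_nonint[OF ns, of n] unfolding b0 by simp
qed


lemma B_int0:
  assumes l: "lam \<noteq> 1" and k: "of_int k = sB"
  shows "B n = 0"
proof -
  have K0: "B 0 * sB * (lam - 1) = 0" using B_rel2[of k] k by simp
  have Bl: "B n' = lam * B 0" if "n' \<noteq> k" for n'
  proof -
    have "of_int n' - sB \<noteq> 0" unfolding k[symmetric] using that by simp
    then show ?thesis using B_rel2[of n', unfolded K0] by simp
  qed
  define t where "t = \<bar>k\<bar> + 1"
  have t1: "t \<noteq> k" and t2: "t + 1 \<noteq> k" and t3: "t + (t + 1) \<noteq> k" and t4: "(t + (t+1) = 0) = False"
    unfolding t_def by auto
  have "(1 - lam) * (lam * B 0) = 0"
    using E4[where m=t and n="t+1", unfolded Bl[OF t1] Bl[OF t2] Bl[OF t3] t4 if_False]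
    by (simp add: algebra_simps)
  then have lb: "lam * B 0 = 0" using l by simp
  have b0: "B 0 = 0"
  proof (rule ccontr)
    assume nb: "B 0 \<noteq> 0"
    then have l0: "lam = 0" using lb by simp
    have "sB = 0" using K0 nb l by simp
    then have k0: "k = 0" using k by simp
    have c: "(-1 + 1 = (0::int)) = True" by simp
    have "B 1 = 0" using Bl[of 1] k0 l0 by simp
    moreover have "B (-1) = 0" using Bl[of "-1"] k0 l0 by simp
    moreover have "2 * (of_int (1 - -1) * B (-1 + 1) + kap (-1) * phi (ev BC) (BM (-1 + 1 + j)))
         = - B (-1) * (of_int (-1 + j) - lam * of_int 1 + 2 * mu) + B 1 * (of_int (1 + j) - lam * of_int (-1) + 2 * mu)"
      using E4[where m="-1" and n=1, unfolded c if_True] .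
    ultimately have "4 * B 0 = 0" by simp
    then show False using nb by simp
  qed
  show ?thesis
  proof (cases "n = k")
    case False
    then show ?thesis using Bl lb by simp
  next
    case True
    show ?thesis
    proof (cases "k = 0")
      case True
      then show ?thesis using \<open>n = k\<close> b0 by simp
    next
      case knz: False
      have Z: "B k * (of_int k + sB - lam * of_int (r * k)) = 0" if r: "r \<noteq> 0" "r \<noteq> 1" "r \<noteq> -1" for r
      proof -
        have a1: "r * k \<noteq> k" using r knz by simp
        have a2: "r * k + k \<noteq> k" using r knz by simp
        have a3: "(r * k + k = 0) = False" using r knz
          by (metis add.commute add_eq_0_iff_both_eq_0 mult_cancel_right1 neg_equal_iff_equal add_eq_0_iff2 mult_minus_left)
        show ?thesis
          using E4[where m="r*k" and n=k, unfolded Bl[OF a1] Bl[OF a2] a3 if_False lb]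
          by (simp add: algebra_simps)
      qed
      have f3: "of_int k + of_int k - lam * of_int (3 * k) = of_int k * (2 - 3 * lam)" by (simp add: algebra_simps)
      have f4: "of_int k + of_int k - lam * of_int (4 * k) = of_int k * (2 - 4 * lam)" by (simp add: algebra_simps)
      have z3: "B k * (of_int k * (2 - 3 * lam)) = 0" using Z[of 3, unfolded k[symmetric] f3] by simp
      have z4: "B k * (of_int k * (2 - 4 * lam)) = 0" using Z[of 4, unfolded k[symmetric] f4] by simp
      have "B k = 0"
      proof (rule ccontr)
        assume "B k \<noteq> 0"
        then have "2 - 3 * lam = 0" "2 - 4 * lam = 0" using z3 z4 knz by auto
        then show False by algebra
      qed
      then show ?thesis using True by simp
    qed
  qed
qed

lemma B_ne1: "lam \<noteq> 1 \<Longrightarrow> B n = 0"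
  using B_int0 B_nonint0 by blast


lemma Q_all:
  assumes ny: "\<And>n. of_int n + 1/2 + mu = of_int j \<Longrightarrow> lam \<noteq> -1"
  shows "Q k = astar"
proof -
  obtain a where a: "astar = a" by simp
  have Ya: "Yv n = a" for n using Y_all[OF ny] a by simp
  have "Q k = a"
  proof (cases "k = 1")
    case True
    have "2 * of_int (1 - -1) * Q (-1 + 1 + 1) = a * of_int (1 - -1 - j) + a * of_int (1 + j - -1)"
      using E7[where m="-1" and n=1, unfolded Ya] .
    then show ?thesis using True by (simp add: algebra_simps)
  next
    case False
    have "2 * of_int (0 - (k - 1)) * Q (k - 1 + 0 + 1) = a * of_int (0 - (k - 1) - j) + a * of_int (0 + j - (k - 1))"
      using E7[where m="k-1" and n=0, unfolded Ya] .
    then have "of_int (1 - k) * (Q k - a) = 0" apply (simp add: algebra_simps del: mult_eq_0_iff)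
      subgoal premises p using p[THEN eq_diff] by algebra
      done
    moreover have "of_int (1 - k) \<noteq> (0::complex)" using False by simp
    ultimately show ?thesis by simp
  qed
  then show ?thesis using a by simp
qed

abbreviation "beta \<equiv> (if lam = 1 then phi (ev (BL 0)) (BM j) else 0)"

lemma B_all: "B n = beta"
  using B_lam1[of n] B_ne1[of n] by (cases "lam = 1") simp_all

lemma CM0: "CM = 0"
proof -
  obtain b where b: "beta = b" by simp
  have Bb: "B n = b" for n using B_all b by simp
  have c: "(-2 + 2 = (0::int)) = True" by simp
  have e: "2 * (of_int (2 - -2) * b + kap (-2) * phi (ev BC) (BM (-2 + 2 + j)))
     = - b * (of_int (-2 + j) - lam * of_int 2 + 2 * mu) + b * (of_int (2 + j) - lam * of_int (-2) + 2 * mu)"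
    using E4[where m="-2" and n=2, unfolded Bb c if_True] .
  show ?thesis
  proof (cases "lam = 1")
    case True
    then show ?thesis using e by (simp add: algebra_simps)
  next
    case False
    then have "b = 0" using b by simp
    then show ?thesis using e by simp
  qed
qed

lemma phiL: "phi (ev (BL n)) c = (if c = BL (n+j) then astar else if c = BM (n+j) then beta else 0)"
proof (cases "c \<in> SL (n+j)")
  case True
  then show ?thesis using A_all[of n] B_all[of n] Ec_all[of n] by auto
next
  case False
  then have "c \<notin> supp (phi (ev (BL n)))" using supp_L by blast
  then show ?thesis using False by (auto simp: supp_def)
qed

lemma phiM:
  assumes ny: "\<And>n. of_int n + 1/2 + mu = of_int j \<Longrightarrow> lam \<noteq> -1"
  shows "phi (ev (BM n)) c = (if c = BM (n+j) then astar else 0)"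
proof (cases "c \<in> SL (n+j)")
  case True
  then show ?thesis using P0[of n] Q_all[OF ny, where k=n] F0[of n] by auto
next
  case False
  then have "c \<notin> supp (phi (ev (BM n)))" using supp_M by blast
  then show ?thesis using False by (auto simp: supp_def)
qed

lemma phiY:
  assumes ny: "\<And>n. of_int n + 1/2 + mu = of_int j \<Longrightarrow> lam \<noteq> -1"
  shows "phi (ev (BY n)) c = (if c = BY (n+j) then astar else 0)"
proof (cases "c = BY (n+j)")
  case True
  then show ?thesis using Y_all[OF ny, where n=n] by auto
next
  case False
  then have "c \<notin> supp (phi (ev (BY n)))" using supp_Y by blast
  then show ?thesis using False by (auto simp: supp_def)
qed

lemma phiC: "phi (ev BC) c = (if c = BC then astar else 0)"
proof (cases "c \<in> SL j")
  case True
  then show ?thesis using CL0 CM0 CC_val by auto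
next
  case False
  then have "c \<notin> supp (phi (ev BC))" using supp_C by blast
  then show ?thesis using False by (auto simp: supp_def)
qed

lemma forward:
  assumes ny: "\<And>n. of_int n + 1/2 + mu = of_int j \<Longrightarrow> lam \<noteq> -1"
    and x: "x \<in> carrier"
  shows "phi x = (\<lambda>b. (if j = 0 then phi (ev (BL 0)) (BL j) else 0) * x b + phi_ja j beta x b)"
proof -
  obtain kk where kk: "phi (ev (BL 0)) (BL j) = kk" by simp
  obtain bb where bb: "beta = bb" by simp
  have L: "phi (ev (BL n)) c = (if c = BL (n+j) then (if j = 0 then kk else 0) else if c = BM (n+j) then bb else 0)" for n c
    using phiL[of n c] unfolding kk bb .
  have M: "phi (ev (BM n)) c = (if c = BM (n+j) then (if j = 0 then kk else 0) else 0)" for n c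
    using phiM[OF ny, where n=n and c=c] unfolding kk .
  have Y: "phi (ev (BY n)) c = (if c = BY (n+j) then (if j = 0 then kk else 0) else 0)" for n c
    using phiY[OF ny, where n=n and c=c] unfolding kk .
  have C: "phi (ev BC) c = (if c = BC then (if j = 0 then kk else 0) else 0)" for c
    using phiC[of c] unfolding kk .
  have "phi x = (\<lambda>b. (if j = 0 then kk else 0) * x b + phi_ja j bb x b)"
  proof (rule lin_eq[OF lin Tm_linear _ x])
    fix b
    show "phi (ev b) = (\<lambda>c. (if j = 0 then kk else 0) * ev b c + phi_ja j bb (ev b) c)"
    proof (cases "\<exists>n. b = BL n")
      case True
      then obtain n where b: "b = BL n" by blast
      show ?thesis unfolding b Tm_ev_BL by (rule ext) (auto simp: L ev_eq)
    next
      case False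
      then have nb: "\<forall>n. b \<noteq> BL n" by simp
      show ?thesis unfolding Tm_ev_other[OF nb]
      proof (rule ext)
        fix c show "phi (ev b) c = (if j = 0 then kk else 0) * ev b c"
          using nb by (cases b) (auto simp: M Y C ev_eq)
      qed
    qed
  qed
  then show ?thesis unfolding kk bb .
qed

end

lemma br_carrier:
  assumes x: "x \<in> carrier" and y: "y \<in> carrier"
  shows "br lam mu x y \<in> carrier"
proof -
  have fx: "finite (supp x)" and fy: "finite (supp y)" using x y finite_supp by auto
  define w where "w a = (\<lambda>c. \<Sum>b\<in>supp y. y b * brb lam mu a b c)" for a
  have w: "w a \<in> carrier" for a unfolding w_def by (rule carrier_sum_gen[OF fy]) (simp add: brb_carrier)
  have bxy: "br lam mu x y = (\<lambda>c. \<Sum>a\<in>supp x. x a * w a c)"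
    unfolding br_def w_def by (simp add: sum_distrib_left mult.assoc)
  show ?thesis unfolding bxy by (rule carrier_sum_gen[OF fx]) (simp add: w)
qed

lemma Delta_cong:
  assumes e: "\<forall>x\<in>carrier. phi x = T x" and T: "T \<in> Delta lam mu j"
  shows "phi \<in> Delta lam mu j"
proof -
  have hT: "half_derivation lam mu T" and dT: "has_degree2 (2*j) T" using T unfolding Delta_def by auto
  have lT: "is_linear T" using hT unfolding half_derivation_def by simp
  have l: "is_linear phi"
    unfolding is_linear_def
  proof (intro conjI ballI allI)
    fix x assume "x \<in> carrier" then show "phi x \<in> carrier" using e lT unfolding is_linear_def by simp
  next
    fix x y assume x: "x \<in> carrier" and y: "y \<in> carrier"
    have "(\<lambda>b. x b + y b) \<in> carrier" using x y by simp
    then show "phi (\<lambda>b. x b + y b) = (\<lambda>b. phi x b + phi y b)"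
      using e x y lin_add[OF lT x y] by simp
  next
    fix x c assume x: "x \<in> carrier"
    have "(\<lambda>b. c * x b) \<in> carrier" using x by simp
    then show "phi (\<lambda>b. c * x b) = (\<lambda>b. c * phi x b)"
      using e x lin_smult[OF lT x] by simp
  qed
  have h: "half_derivation lam mu phi"
    unfolding half_derivation_def
  proof (intro conjI ballI l)
    fix x y assume x: "x \<in> carrier" and y: "y \<in> carrier"
    have "br lam mu x y \<in> carrier" by (rule br_carrier[OF x y])
    then show "phi (br lam mu x y) = (\<lambda>c. (br lam mu (phi x) y c + br lam mu x (phi y) c) / 2)"
      using e x y hT unfolding half_derivation_def by simp
  qed
  have d: "has_degree2 (2*j) phi"
    unfolding has_degree2_def
  proof (intro allI impI)
    fix k x assume hx: "homog k x"
    then have "x \<in> carrier" unfolding homog_def by simp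
    then show "homog (k + 2*j) (phi x)" using e hx dT unfolding has_degree2_def by simp
  qed
  show ?thesis using h d unfolding Delta_def by simp
qed

lemma phi_ja_zero: "phi_ja j 0 x = (\<lambda>b. 0)"
  unfolding phi_ja_def by (rule ext) (simp split: basis.split)

lemma Tm_half:
  assumes al: "alpha = 0 \<or> lam = 1"
  shows "half_derivation lam mu (\<lambda>x b. K * x b + phi_ja j alpha x b)"
  unfolding half_derivation_def
proof (intro conjI ballI Tm_linear)
  fix x y assume x: "x \<in> carrier" and y: "y \<in> carrier"
  have bas: "2 * (K * brb lam mu a b c + phi_ja j alpha (brb lam mu a b) c)
      = br lam mu (\<lambda>b. K * ev a b + phi_ja j alpha (ev a) b) (ev b) c + br lam mu (ev a) (\<lambda>c. K * ev b c + phi_ja j alpha (ev b) c) c"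
    for a b c
  proof (cases "lam = 1")
    case True
    show ?thesis unfolding brT_l brT_r True using phi_ja_brb1[of j alpha mu a b c] by (simp add: algebra_simps)
  next
    case False
    then have a0: "alpha = 0" using al by simp
    show ?thesis unfolding brT_l brT_r unfolding a0 phi_ja_zero by (cases a; cases b) simp_all
  qed
  show "(\<lambda>b. K * br lam mu x y b + phi_ja j alpha (br lam mu x y) b) =
        (\<lambda>c. (br lam mu (\<lambda>b. K * x b + phi_ja j alpha x b) y c + br lam mu x (\<lambda>b. K * y b + phi_ja j alpha y b) c) / 2)"
  proof (rule ext)
    fix c
    show "K * br lam mu x y c + phi_ja j alpha (br lam mu x y) c =
        (br lam mu (\<lambda>b. K * x b + phi_ja j alpha x b) y c + br lam mu x (\<lambda>b. K * y b + phi_ja j alpha y b) c) / 2"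
      using half_from_basis[OF Tm_linear bas x y] by simp
  qed
qed

lemma Tm_degree: "has_degree2 (2*j) (\<lambda>x b. (if j = 0 then K else 0) * x b + phi_ja j alpha x b)"
  unfolding has_degree2_def
proof (intro allI impI)
  fix k x assume hx: "homog k x"
  then have x: "x \<in> carrier" and dx: "\<forall>b. x b \<noteq> 0 \<longrightarrow> deg2 b = k" unfolding homog_def by auto
  have "(\<lambda>b. (if j = 0 then K else 0) * x b + phi_ja j alpha x b) \<in> carrier"
    using Tm_linear x unfolding is_linear_def by blast
  moreover have "deg2 b = k + 2 * j" if nz: "(if j = 0 then K else 0) * x b + phi_ja j alpha x b \<noteq> 0" for b
  proof (cases "phi_ja j alpha x b = 0")
    case True
    then have "j = 0" "x b \<noteq> 0" using nz by (auto split: if_splits)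
    then show ?thesis using dx by simp
  next
    case False
    then obtain m where b: "b = BM m" and xm: "x (BL (m - j)) \<noteq> 0"
      unfolding phi_ja_def by (cases b) auto
    then have "deg2 (BL (m - j)) = k" using dx by blast
    then show ?thesis using b by simp
  qed
  ultimately show "homog (k + 2 * j) (\<lambda>b. (if j = 0 then K else 0) * x b + phi_ja j alpha x b)"
    unfolding homog_def by blast
qed

lemma Tm_Delta: "alpha = 0 \<or> lam = 1 \<Longrightarrow> (\<lambda>x b. (if j = 0 then K else 0) * x b + phi_ja j alpha x b) \<in> Delta lam mu j"
  unfolding Delta_def using Tm_half Tm_degree by blast


lemma ny_from_cond:
  assumes cond: "(\<not> (\<exists>k::int. 2 * mu = of_int k))
              \<or> ((\<exists>k::int. mu = of_int k + 1/2) \<and> lam \<notin> {-3, -1, 1})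
              \<or> ((\<exists>k::int. mu = of_int k) \<and> lam \<noteq> -1)"
    and h: "of_int n + 1/2 + mu = (of_int j :: complex)"
  shows "lam \<noteq> -1"
proof -
  have m: "mu = of_int j - of_int n - 1/2" using h by (simp add: algebra_simps)
  have "2 * mu = of_int (2*j - 2*n - 1)" unfolding m by (simp add: algebra_simps)
  then have c1: "\<exists>k::int. 2 * mu = of_int k" by blast
  have c3: "\<not> (\<exists>k::int. mu = of_int k)"
  proof
    assume "\<exists>k::int. mu = of_int k"
    then obtain k where k: "mu = of_int k" by blast
    have "(of_int (2*k + 2*n + 1) :: complex) = of_int (2*j)"
      using h unfolding k apply (simp add: algebra_simps)
      subgoal premises p using p[THEN eq_diff] by algebra
      done
    then have "2*k + 2*n + 1 = 2*j" by (simp only: of_int_eq_iff)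
    then show False by presburger
  qed
  show ?thesis using cond c1 c3 by auto
qed

theorem mainTheorem5:
  fixes lam mu :: complex and j :: int
  assumes cond: "(\<not> (\<exists>k::int. 2 * mu = of_int k))
              \<or> ((\<exists>k::int. mu = of_int k + 1/2) \<and> lam \<notin> {-3, -1, 1})
              \<or> ((\<exists>k::int. mu = of_int k) \<and> lam \<noteq> -1)"
  shows "(lam \<noteq> 1 \<longrightarrow>
            (\<forall>phi. phi \<in> Delta lam mu j \<longleftrightarrow>
               (\<exists>c. \<forall>x\<in>carrier. phi x = (\<lambda>b. (if j = 0 then c else 0) * x b))))
       \<and> (lam = 1 \<longrightarrow>
            (\<forall>phi. phi \<in> Delta lam mu j \<longleftrightarrow>
               (\<exists>c alpha. \<forall>x\<in>carrier.
                  phi x = (\<lambda>b. (if j = 0 then c else 0) * x b + phi_ja j alpha x b))))"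
proof -
  have ny: "\<And>n. of_int n + 1/2 + mu = of_int j \<Longrightarrow> lam \<noteq> -1"
    using ny_from_cond[OF cond] by blast
  have fwd: "\<forall>x\<in>carrier. phi x = (\<lambda>b. (if j = 0 then phi (ev (BL 0)) (BL j) else 0) * x b
       + phi_ja j (if lam = 1 then phi (ev (BL 0)) (BM j) else 0) x b)"
    if "phi \<in> Delta lam mu j" for phi
  proof -
    have hd: "HD lam mu j phi" using that unfolding HD_def Delta_def by simp
    show ?thesis
    proof
      fix x assume x: "x \<in> carrier"
      show "phi x = (\<lambda>b. (if j = 0 then phi (ev (BL 0)) (BL j) else 0) * x b
         + phi_ja j (if lam = 1 then phi (ev (BL 0)) (BM j) else 0) x b)"
        using HD.forward[OF hd] ny x by blast
    qed
  qed
  show ?thesis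
  proof (intro conjI impI allI iffI)
    fix phi assume l: "lam \<noteq> 1" and p: "phi \<in> Delta lam mu j"
    show "\<exists>c. \<forall>x\<in>carrier. phi x = (\<lambda>b. (if j = 0 then c else 0) * x b)"
      using fwd[OF p] l by (intro exI[of _ "phi (ev (BL 0)) (BL j)"]) (simp add: phi_ja_zero)
  next
    fix phi assume l: "lam \<noteq> 1" and "\<exists>c. \<forall>x\<in>carrier. phi x = (\<lambda>b. (if j = 0 then c else 0) * x b)"
    then obtain c where c: "\<forall>x\<in>carrier. phi x = (\<lambda>b. (if j = 0 then c else 0) * x b)" by blast
    have e: "\<forall>x\<in>carrier. phi x = (\<lambda>x b. (if j = 0 then c else 0) * x b + phi_ja j 0 x b) x"
      using c by (simp add: phi_ja_zero)
    show "phi \<in> Delta lam mu j" by (rule Delta_cong[OF e Tm_Delta]) simp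
  next
    fix phi assume l: "lam = 1" and p: "phi \<in> Delta lam mu j"
    show "\<exists>c alpha. \<forall>x\<in>carrier. phi x = (\<lambda>b. (if j = 0 then c else 0) * x b + phi_ja j alpha x b)"
      using fwd[OF p] l by blast
  next
    fix phi assume l: "lam = 1" and "\<exists>c alpha. \<forall>x\<in>carrier. phi x = (\<lambda>b. (if j = 0 then c else 0) * x b + phi_ja j alpha x b)"
    then obtain c alpha where c: "\<forall>x\<in>carrier. phi x = (\<lambda>b. (if j = 0 then c else 0) * x b + phi_ja j alpha x b)" by blast
    have e: "\<forall>x\<in>carrier. phi x = (\<lambda>x b. (if j = 0 then c else 0) * x b + phi_ja j alpha x b) x"
      using c by simp
    show "phi \<in> Delta lam mu j" by (rule Delta_cong[OF e Tm_Delta]) (simp add: l)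
  qed
qed

end
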